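(* For each $n\ge1$ let $\mathrm T_n=(T_n,\mathrm D_n)$ be a random labeled multitype plane tree with valid law $\nu_n$, and let $\mathrm T_n^{\mathrm{sym}}=(T_n^{\mathrm{sym}},\mathrm D_n^{\mathrm{sym}})$ have law $\nu_n^{\mathrm{sym}}$. Fix a type $q\in S$. If there exists a $C([0,1],\mathbb R)$-valued random process $\Lambda^{(q)}$ such that $|V(T_n^{\mathrm{sym}})|^{-1}\Lambda^{(q)}_{T_n^{\mathrm{sym}}}\to\Lambda^{(q)}$ in distribution, then also $|V(T_n)|^{-1}\Lambda^{(q)}_{T_n}\to\Lambda^{(q)}$ in distribution.
   Context: Plane trees are rooted, encoded by Ulam–Harris words, with vertex types $s(v)$ in a countable set $S$; a labeled tree $(t,\mathrm d)$ has real displacements on edges. $P_t$ is the set of vectors of permutations of the children of each vertex; $\sigma(t,\mathrm d)$ reorders children accordingly with displacements following edges; the symmetrization of a random labeled tree is $\sigma(T,\mathrm D)$ with $\sigma$ uniform on $P_T$ given the tree, and $\nu^{\mathrm{sym}}$ is its law. A law $\nu$ is valid if (i) the law of the unlabeled tree is invariant under all $\sigma\in P_t$, (ii) the child-displacement vectors $D_v=(D_{v,v1},\dots,D_{v,vk(v)})$ are conditionally independent given $T$, (iii) the conditional law of $D_v$ depends only on the type of $v$ and the types of its children. The contour exploration $\theta:\{0,\dots,2|t|-2\}\to V(t)$ is the depth-first walk ($\theta(0)=\emptyset$; $\theta(i)$ is the lexicographically first unvisited child of $\theta(i-1)$, else its parent). For a tree $t$ with $n=|V(t)|$ vertices and $q\in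 S$, $\Lambda^{(q)}_t(i/(2n-2))=|\{0\le j<i: s(\theta(j))=q\}|$ for $0\le i\le 2n-2$, extended to $[0,1]$ by linear interpolation. Convergence in distribution is in $C([0,1],\mathbb R)$ with the uniform topology. *)

theory Defs
  imports "HOL-Probability.Probability"
begin

text \<open>A typed tree is a partial map from Ulam--Harris words to types; its vertex
set is the domain.  Children of v are v@[0], v@[1], ... (0-based indices).
A labeled tree additionally carries a displacement d w on the edge from the
parent of w to w (coordinate d w is set to 0 when w is the root or not a vertex).\<close>

type_synonym 's ttree = "nat list \<Rightarrow> 's option"
type_synonym 's ltree = "'s ttree \<times> (nat list \<Rightarrow> real)"

definition plane_tree :: "nat list set \<Rightarrow> bool" where
  "plane_tree t \<longleftrightarrow> finite t \<and> [] \<in> t \<and>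
     (\<forall>u i. u @ [i] \<in> t \<longrightarrow> u \<in> t) \<and>
     (\<forall>u i j. u @ [i] \<in> t \<longrightarrow> j < i \<longrightarrow> u @ [j] \<in> t)"

definition is_ltree :: "'s ltree \<Rightarrow> bool" where
  "is_ltree x \<longleftrightarrow> plane_tree (dom (fst x)) \<and>
     (\<forall>w. (w \<notin> dom (fst x) \<or> w = []) \<longrightarrow> snd x w = 0)"

definition kids :: "'s ttree \<Rightarrow> nat list \<Rightarrow> nat" where
  "kids \<tau> v = card {i. v @ [i] \<in> dom \<tau>}"

definition childtypes :: "'s ttree \<Rightarrow> nat list \<Rightarrow> 's list" where
  "childtypes \<tau> v = map (\<lambda>i. the (\<tau> (v @ [i]))) [0..<kids \<tau> v]"

definition ltreeM :: "'s ltree measure" where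
  "ltreeM = count_space UNIV \<Otimes>\<^sub>M (\<Pi>\<^sub>M w\<in>UNIV. borel)"

definition perms :: "'s ttree \<Rightarrow> (nat list \<Rightarrow> nat \<Rightarrow> nat) set" where
  "perms \<tau> = {\<sigma>. (\<forall>v\<in>dom \<tau>. \<sigma> v permutes {..<kids \<tau> v}) \<and> (\<forall>v. v \<notin> dom \<tau> \<longrightarrow> \<sigma> v = id)}"

text \<open>Relabeling of words: the child u@[i] of u is sent to the child number
\<sigma> u i of the image of u.\<close>
fun rl_aux :: "(nat list \<Rightarrow> nat \<Rightarrow> nat) \<Rightarrow> nat list \<Rightarrow> nat list \<Rightarrow> nat list" where
  "rl_aux \<sigma> pre [] = []"
| "rl_aux \<sigma> pre (i # w) = \<sigma> pre i # rl_aux \<sigma> (pre @ [i]) w"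

definition rl :: "(nat list \<Rightarrow> nat \<Rightarrow> nat) \<Rightarrow> nat list \<Rightarrow> nat list" where
  "rl \<sigma> w = rl_aux \<sigma> [] w"

definition act :: "(nat list \<Rightarrow> nat \<Rightarrow> nat) \<Rightarrow> 's ttree \<Rightarrow> 's ttree" where
  "act \<sigma> \<tau> = \<tau> \<circ> inv (rl \<sigma>)"

definition actL :: "(nat list \<Rightarrow> nat \<Rightarrow> nat) \<Rightarrow> 's ltree \<Rightarrow> 's ltree" where
  "actL \<sigma> x = (fst x \<circ> inv (rl \<sigma>), snd x \<circ> inv (rl \<sigma>))"

definition Dvec :: "'s ttree \<Rightarrow> 's ltree \<Rightarrow> nat list \<Rightarrow> nat \<Rightarrow> real" where
  "Dvec \<tau> x = (\<lambda>v\<in>dom \<tau>. \<lambda>i\<in>{..<kids \<tau> v}. snd x (v @ [i]))"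

definition Dspace :: "'s ttree \<Rightarrow> (nat list \<Rightarrow> nat \<Rightarrow> real) measure" where
  "Dspace \<tau> = (\<Pi>\<^sub>M v\<in>dom \<tau>. \<Pi>\<^sub>M i\<in>{..<kids \<tau> v}. borel)"

text \<open>(i) invariance of the law of the (typed) tree; (ii)+(iii): given T = tau,
the vectors D_v, v in V(tau), are independent, D_v having a law mu (type of v)
(types of children of v) depending only on these types.\<close>
definition valid_law :: "'s ltree measure \<Rightarrow> bool" where
  "valid_law \<nu> \<longleftrightarrow> prob_space \<nu> \<and> sets \<nu> = sets ltreeM \<and> (AE x in \<nu>. is_ltree x) \<and>
    (\<forall>\<tau>. \<forall>\<sigma>\<in>perms \<tau>.
        emeasure \<nu> {x \<in> space \<nu>. fst x = act \<sigma> \<tau>} = emeasure \<nu> {x \<in> space \<nu>. fst x = \<tau>}) \<and>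
    (\<exists>\<mu> :: 's \<Rightarrow> 's list \<Rightarrow> (nat \<Rightarrow> real) measure.
       (\<forall>a cs. prob_space (\<mu> a cs) \<and> sets (\<mu> a cs) = sets (\<Pi>\<^sub>M i\<in>{..<length cs}. borel)) \<and>
       (\<forall>\<tau>. \<forall>A\<in>sets (Dspace \<tau>).
          emeasure \<nu> {x \<in> space \<nu>. fst x = \<tau> \<and> Dvec \<tau> x \<in> A} =
          emeasure \<nu> {x \<in> space \<nu>. fst x = \<tau>} *
          emeasure (\<Pi>\<^sub>M v\<in>dom \<tau>. \<mu> (the (\<tau> v)) (childtypes \<tau> v)) A))"

definition sym_law :: "'s ltree measure \<Rightarrow> 's ltree measure" where
  "sym_law \<nu> = \<nu> \<bind> (\<lambda>x. distr (measure_pmf (pmf_of_set (perms (fst x)))) ltreeM (\<lambda>\<sigma>. actL \<sigma> x))"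

fun contour_aux :: "'s ttree \<Rightarrow> nat \<Rightarrow> nat list \<Rightarrow> nat list list" where
  "contour_aux \<tau> 0 v = [v]"
| "contour_aux \<tau> (Suc f) v =
     v # concat (map (\<lambda>i. contour_aux \<tau> f (v @ [i]) @ [v]) [0..<kids \<tau> v])"

text \<open>contour \<tau> ! i = theta(i), 0 <= i <= 2n-2 (depth < n, so fuel n suffices)\<close>
definition contour :: "'s ttree \<Rightarrow> nat list list" where
  "contour \<tau> = contour_aux \<tau> (card (dom \<tau>)) []"

definition cnt :: "'s \<Rightarrow> 's ttree \<Rightarrow> nat \<Rightarrow> real" where
  "cnt q \<tau> i = real (length (filter (\<lambda>v. \<tau> v = Some q) (take i (contour \<tau>))))"

text \<open>Lambda^(q)_t on [0,1]: linear interpolation of cnt at the points i/(2n-2);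
for n = 1 it is the constant 0.\<close>
definition Lam :: "'s \<Rightarrow> 's ttree \<Rightarrow> real \<Rightarrow> real" where
  "Lam q \<tau> x = (let m = 2 * card (dom \<tau>) - 2; y = x * real m; i = nat \<lfloor>y\<rfloor>
                 in cnt q \<tau> i + (y - real i) * (cnt q \<tau> (Suc i) - cnt q \<tau> i))"

text \<open>C([0,1],R) is represented inside the space of bounded continuous functions on R
with the uniform metric, by extending f constantly outside [0,1].\<close>
definition clamp01 :: "real \<Rightarrow> real" where
  "clamp01 x = max 0 (min 1 x)"

definition ext01 :: "(real \<Rightarrow> real) \<Rightarrow> (real \<Rightarrow>\<^sub>C real)" where
  "ext01 f = Bcontfun (f \<circ> clamp01)"

definition LamN :: "'s \<Rightarrow> 's ltree \<Rightarrow> (real \<Rightarrow>\<^sub>C real)" where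
  "LamN q x = ext01 (\<lambda>s. Lam q (fst x) s / real (card (dom (fst x))))"

definition conv_distr :: "(nat \<Rightarrow> 'a::metric_space measure) \<Rightarrow> 'a measure \<Rightarrow> bool" where
  "conv_distr M L \<longleftrightarrow> (\<forall>f :: 'a \<Rightarrow> real. continuous_on UNIV f \<and> bounded (range f) \<longrightarrow>
      (\<lambda>n. \<integral>z. f z \<partial>M n) \<longlonglongrightarrow> (\<integral>z. f z \<partial>L))"

end

theory Submission
  imports Defs
begin


lemma rl_aux_snoc: "rl_aux \<sigma> pre (w @ [i]) = rl_aux \<sigma> pre w @ [\<sigma> (pre @ w) i]"
  by (induction w arbitrary: pre) auto

lemma rl_snoc: "rl \<sigma> (w @ [i]) = rl \<sigma> w @ [\<sigma> w i]"
  by (simp add: rl_def rl_aux_snoc)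

lemma rl_Nil[simp]: "rl \<sigma> [] = []" by (simp add: rl_def)

lemma length_rl[simp]: "length (rl \<sigma> w) = length w"
  by (induction w rule: rev_induct) (auto simp: rl_snoc)

definition BJ :: "(nat list \<Rightarrow> nat \<Rightarrow> nat) \<Rightarrow> bool" where
  "BJ \<sigma> \<longleftrightarrow> (\<forall>v. bij (\<sigma> v))"

lemma rl_inj:
  assumes "BJ \<sigma>" shows "inj (rl \<sigma>)"
proof -
  have "\<forall>w2. rl \<sigma> w1 = rl \<sigma> w2 \<longrightarrow> w1 = w2" for w1
  proof (induction w1 rule: rev_induct)
    case Nil then show ?case by (metis length_0_conv length_rl)
  next
    case (snoc i u)
    show ?case
    proof (intro allI impI)
      fix w2 assume eq: "rl \<sigma> (u @ [i]) = rl \<sigma> w2"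
      then have "w2 \<noteq> []" by (metis length_rl snoc_eq_iff_butlast length_0_conv)
      then obtain u' i' where w2: "w2 = u' @ [i']" by (metis rev_exhaust)
      from eq have "rl \<sigma> u = rl \<sigma> u'" "\<sigma> u i = \<sigma> u' i'" by (auto simp: w2 rl_snoc)
      with snoc have "u = u'" by blast
      with \<open>\<sigma> u i = \<sigma> u' i'\<close> assms have "i = i'" unfolding BJ_def by (metis bij_pointE)
      then show "u @ [i] = w2" using \<open>u = u'\<close> w2 by simp
    qed
  qed
  then show ?thesis by (auto intro: injI)
qed

lemma rl_surj:
  assumes "BJ \<sigma>" shows "surj (rl \<sigma>)"
proof -
  have "\<exists>w. rl \<sigma> w = w'" for w'
  proof (induction w' rule: rev_induct)
    case Nil then show ?case by (auto intro: exI[of _ "[]"])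
  next
    case (snoc j w')
    then obtain u where u: "rl \<sigma> u = w'" by blast
    from assms obtain i where "\<sigma> u i = j" unfolding BJ_def by (metis bij_pointE)
    then show ?case using u by (auto simp: rl_snoc intro!: exI[of _ "u @ [i]"])
  qed
  then show ?thesis by (metis surjI)
qed

lemma rl_bij: "BJ \<sigma> \<Longrightarrow> bij (rl \<sigma>)"
  using rl_inj rl_surj by (auto simp: bij_def)

lemma perms_BJ: "\<sigma> \<in> perms \<tau> \<Longrightarrow> BJ \<sigma>"
  unfolding perms_def BJ_def by (metis (mono_tags, lifting) bij_id mem_Collect_eq permutes_bij)

lemma dom_act: "BJ \<sigma> \<Longrightarrow> dom (act \<sigma> \<tau>) = rl \<sigma> ` dom \<tau>"
  unfolding act_def dom_def
  by (auto simp: image_iff) (metis bij_inv_eq_iff rl_bij)+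

lemma act_rl[simp]: "BJ \<sigma> \<Longrightarrow> act \<sigma> \<tau> (rl \<sigma> v) = \<tau> v"
  unfolding act_def by (simp add: rl_inj)

definition sstar :: "(nat list \<Rightarrow> nat \<Rightarrow> nat) \<Rightarrow> (nat list \<Rightarrow> nat \<Rightarrow> nat)" where
  "sstar \<sigma> = (\<lambda>v. inv (\<sigma> (inv (rl \<sigma>) v)))"

lemma BJ_sstar: "BJ \<sigma> \<Longrightarrow> BJ (sstar \<sigma>)"
  unfolding BJ_def sstar_def by (simp add: bij_imp_bij_inv)

lemma rl_sstar_rl: assumes "BJ \<sigma>" shows "rl (sstar \<sigma>) (rl \<sigma> w) = w"
proof (induction w rule: rev_induct)
  case (snoc i u)
  have "inv (rl \<sigma>) (rl \<sigma> u) = u" using rl_inj[OF assms] by simp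
  moreover have "inv (\<sigma> u) (\<sigma> u i) = i" using assms unfolding BJ_def by (meson bij_is_inj inv_f_f)
  ultimately show ?case using snoc by (simp add: rl_snoc sstar_def)
qed simp

lemma rl_sstar: assumes "BJ \<sigma>" shows "rl (sstar \<sigma>) = inv (rl \<sigma>)"
proof
  fix w
  have "w = rl \<sigma> (inv (rl \<sigma>) w)" using rl_surj[OF assms] by (simp add: surj_f_inv_f)
  then have "rl (sstar \<sigma>) w = rl (sstar \<sigma>) (rl \<sigma> (inv (rl \<sigma>) w))" by simp
  also have "\<dots> = inv (rl \<sigma>) w" using rl_sstar_rl[OF assms] .
  finally show "rl (sstar \<sigma>) w = inv (rl \<sigma>) w" .
qed

lemma sstar_sstar: assumes "BJ \<sigma>" shows "sstar (sstar \<sigma>) = \<sigma>"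
proof
  fix v
  have "inv (rl (sstar \<sigma>)) = rl \<sigma>" using rl_sstar[OF assms] rl_bij[OF assms] by (simp add: inv_inv_eq)
  then have "sstar (sstar \<sigma>) v = inv (inv (\<sigma> (inv (rl \<sigma>) (rl \<sigma> v))))"
    by (simp add: sstar_def)
  also have "\<dots> = \<sigma> v" using assms rl_inj[OF assms] unfolding BJ_def by (simp add: inv_inv_eq)
  finally show "sstar (sstar \<sigma>) v = \<sigma> v" .
qed

lemma act_sstar_act: assumes "BJ \<sigma>" shows "act (sstar \<sigma>) (act \<sigma> \<tau>) = \<tau>"
proof -
  have "inv (rl (sstar \<sigma>)) = rl \<sigma>" using rl_sstar[OF assms] rl_bij[OF assms] by (simp add: inv_inv_eq)
  then show ?thesis unfolding act_def using rl_inj[OF assms] by (auto simp: fun_eq_iff)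
qed

lemma kids_act: assumes "BJ \<sigma>" shows "kids (act \<sigma> \<tau>) (rl \<sigma> v) = kids \<tau> v"
proof -
  have b: "bij (\<sigma> v)" using assms BJ_def by auto
  have "{i. rl \<sigma> v @ [i] \<in> dom (act \<sigma> \<tau>)} = \<sigma> v ` {j. v @ [j] \<in> dom \<tau>}"
  proof (rule set_eqI, rule iffI)
    fix i assume "i \<in> {i. rl \<sigma> v @ [i] \<in> dom (act \<sigma> \<tau>)}"
    moreover have "rl \<sigma> v @ [i] = rl \<sigma> (v @ [inv (\<sigma> v) i])" using b by (simp add: rl_snoc bij_def surj_f_inv_f)
    ultimately have "v @ [inv (\<sigma> v) i] \<in> dom \<tau>" using assms by (simp add: dom_act rl_inj inj_image_mem_iff)
    then have "\<sigma> v (inv (\<sigma> v) i) \<in> \<sigma> v ` {j. v @ [j] \<in> dom \<tau>}" by blast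
    then show "i \<in> \<sigma> v ` {j. v @ [j] \<in> dom \<tau>}" using b by (simp add: bij_def surj_f_inv_f)
  next
    fix i assume "i \<in> \<sigma> v ` {j. v @ [j] \<in> dom \<tau>}"
    then obtain j where "v @ [j] \<in> dom \<tau>" "i = \<sigma> v j" by blast
    then show "i \<in> {i. rl \<sigma> v @ [i] \<in> dom (act \<sigma> \<tau>)}" using assms by (simp add: dom_act flip: rl_snoc)
  qed
  moreover have "inj_on (\<sigma> v) {j. v @ [j] \<in> dom \<tau>}" using b bij_is_inj inj_on_subset by blast
  ultimately show ?thesis unfolding kids_def by (simp add: card_image)
qed

lemma sstar_perms: assumes "\<sigma> \<in> perms \<tau>" shows "sstar \<sigma> \<in> perms (act \<sigma> \<tau>)"
proof -
  have B: "BJ \<sigma>" using perms_BJ[OF assms] .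
  have 1: "sstar \<sigma> v' permutes {..<kids (act \<sigma> \<tau>) v'}" if v'in: "v' \<in> dom (act \<sigma> \<tau>)" for v'
  proof -
    obtain v where v: "v \<in> dom \<tau>" "v' = rl \<sigma> v" using v'in by (auto simp: dom_act[OF B])
    have "sstar \<sigma> v' = inv (\<sigma> v)" using v rl_inj[OF B] by (simp add: sstar_def)
    moreover have "\<sigma> v permutes {..<kids \<tau> v}" using assms v unfolding perms_def by auto
    ultimately show ?thesis using v kids_act[OF B, of \<tau> v] permutes_inv by metis
  qed
  have 2: "sstar \<sigma> v' = id" if "v' \<notin> dom (act \<sigma> \<tau>)" for v'
  proof -
    have "inv (rl \<sigma>) v' \<notin> dom \<tau>"
    proof
      assume "inv (rl \<sigma>) v' \<in> dom \<tau>"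
      then have "rl \<sigma> (inv (rl \<sigma>) v') \<in> dom (act \<sigma> \<tau>)" by (simp add: dom_act[OF B])
      then show False using that rl_surj[OF B] by (simp add: surj_f_inv_f)
    qed
    then have "\<sigma> (inv (rl \<sigma>) v') = id" using assms unfolding perms_def by auto
    then show ?thesis by (simp add: sstar_def inv_id)
  qed
  show ?thesis using 1 2 unfolding perms_def by auto
qed

lemma id_perms: "(\<lambda>_. id) \<in> perms \<tau>"
  unfolding perms_def by (auto simp: permutes_id)

lemma perms_bij_PiE:
  "bij_betw (\<lambda>\<sigma>. restrict \<sigma> (dom \<tau>)) (perms \<tau>) (PiE (dom \<tau>) (\<lambda>v. {p. p permutes {..<kids \<tau> v}}))"
proof (rule bij_betw_byWitness[where f'="\<lambda>h v. if v \<in> dom \<tau> then h v else id"])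
  show "\<forall>a\<in>perms \<tau>. (\<lambda>v. if v \<in> dom \<tau> then restrict a (dom \<tau>) v else id) = a"
    unfolding perms_def by (auto simp: fun_eq_iff)
  show "\<forall>a'\<in>PiE (dom \<tau>) (\<lambda>v. {p. p permutes {..<kids \<tau> v}}).
          restrict (\<lambda>v. if v \<in> dom \<tau> then a' v else id) (dom \<tau>) = a'"
    by (auto simp: fun_eq_iff PiE_def extensional_def)
  show "(\<lambda>\<sigma>. restrict \<sigma> (dom \<tau>)) ` perms \<tau> \<subseteq> PiE (dom \<tau>) (\<lambda>v. {p. p permutes {..<kids \<tau> v}})"
    unfolding perms_def by auto
  show "(\<lambda>h v. if v \<in> dom \<tau> then h v else id) ` PiE (dom \<tau>) (\<lambda>v. {p. p permutes {..<kids \<tau> v}}) \<subseteq> perms \<tau>"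
    unfolding perms_def by auto
qed

lemma finite_perms: "finite (dom \<tau>) \<Longrightarrow> finite (perms \<tau>)"
  using bij_betw_finite[OF perms_bij_PiE] by (auto intro!: finite_PiE finite_permutations)

lemma card_perms_lt: "card {p. p permutes {..<k::nat}} = fact k"
  by (rule card_permutations) auto

lemma card_perms: assumes "finite (dom \<tau>)" shows "card (perms \<tau>) = (\<Prod>v\<in>dom \<tau>. fact (kids \<tau> v))"
  using bij_betw_same_card[OF perms_bij_PiE[of \<tau>]] assms by (simp add: card_PiE card_perms_lt)

lemma card_perms_pos: "finite (dom \<tau>) \<Longrightarrow> card (perms \<tau>) > 0"
  using finite_perms id_perms by (metis card_gt_0_iff empty_iff)

lemma finite_dom_act: "BJ \<sigma> \<Longrightarrow> finite (dom \<tau>) \<Longrightarrow> finite (dom (act \<sigma> \<tau>))"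
  by (simp add: dom_act)

lemma card_perms_act:
  assumes "\<sigma> \<in> perms \<tau>" "finite (dom \<tau>)"
  shows "card (perms (act \<sigma> \<tau>)) = card (perms \<tau>)"
proof -
  have B: "BJ \<sigma>" using perms_BJ[OF assms(1)] .
  have "card (perms (act \<sigma> \<tau>)) = (\<Prod>v'\<in>rl \<sigma> ` dom \<tau>. fact (kids (act \<sigma> \<tau>) v'))"
    using card_perms[OF finite_dom_act[OF B assms(2)]] by (simp add: dom_act[OF B])
  also have "\<dots> = (\<Prod>v\<in>dom \<tau>. fact (kids (act \<sigma> \<tau>) (rl \<sigma> v)))"
    using rl_inj[OF B] by (simp add: prod.reindex inj_on_subset)
  also have "\<dots> = card (perms \<tau>)" using card_perms[OF assms(2)] by (simp add: kids_act[OF B])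
  finally show ?thesis .
qed

definition NN :: "'s ttree \<Rightarrow> 's ttree \<Rightarrow> nat" where
  "NN \<tau> \<tau>' = card {\<sigma> \<in> perms \<tau>. act \<sigma> \<tau> = \<tau>'}"

lemma NN_sym: "NN \<tau> \<tau>' = NN \<tau>' \<tau>"
proof -
  have "bij_betw sstar {\<sigma> \<in> perms \<tau>. act \<sigma> \<tau> = \<tau>'} {\<sigma> \<in> perms \<tau>'. act \<sigma> \<tau>' = \<tau>}"
  proof (rule bij_betw_byWitness[where f'=sstar])
    show "\<forall>a\<in>{\<sigma> \<in> perms \<tau>. act \<sigma> \<tau> = \<tau>'}. sstar (sstar a) = a"
      using perms_BJ sstar_sstar by blast
    show "\<forall>a\<in>{\<sigma> \<in> perms \<tau>'. act \<sigma> \<tau>' = \<tau>}. sstar (sstar a) = a"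
      using perms_BJ sstar_sstar by blast
    show "sstar ` {\<sigma> \<in> perms \<tau>. act \<sigma> \<tau> = \<tau>'} \<subseteq> {\<sigma> \<in> perms \<tau>'. act \<sigma> \<tau>' = \<tau>}"
      using sstar_perms act_sstar_act perms_BJ by blast
    show "sstar ` {\<sigma> \<in> perms \<tau>'. act \<sigma> \<tau>' = \<tau>} \<subseteq> {\<sigma> \<in> perms \<tau>. act \<sigma> \<tau> = \<tau>'}"
      using sstar_perms act_sstar_act perms_BJ by blast
  qed
  then show ?thesis unfolding NN_def by (rule bij_betw_same_card)
qed

definition TT :: "'s ttree set" where "TT = {\<tau>. finite (dom \<tau>)}"

lemma countable_TT: "countable (TT :: ('s::countable) ttree set)"
proof (rule countable_image_inj_on)
  show "inj_on Map.graph (TT :: 's ttree set)"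
  proof (rule inj_onI)
    fix a b :: "'s ttree" assume "a \<in> TT" "b \<in> TT" "Map.graph a = Map.graph b"
    show "a = b"
    proof
      fix w show "a w = b w"
      proof (cases "a w")
        case None
        then show ?thesis using \<open>Map.graph a = Map.graph b\<close> in_graphD in_graphI
          by (metis not_Some_eq)
      next
        case (Some y)
        then show ?thesis using \<open>Map.graph a = Map.graph b\<close> in_graphD in_graphI by metis
      qed
    qed
  qed
  have "Map.graph ` (TT :: 's ttree set) \<subseteq> Collect finite"
  proof
    fix g assume "g \<in> Map.graph ` (TT :: 's ttree set)"
    then obtain \<tau> :: "'s ttree" where t: "finite (dom \<tau>)" "g = Map.graph \<tau>" unfolding TT_def by auto
    have "Map.graph \<tau> = (\<lambda>x. (x, the (\<tau> x))) ` dom \<tau>" unfolding Map.graph_def by auto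
    then show "g \<in> Collect finite" using t by simp
  qed
  then show "countable (Map.graph ` (TT :: 's ttree set))" using countable_Collect_finite countable_subset by blast
qed

lemma act_TT: "\<tau> \<in> TT \<Longrightarrow> \<sigma> \<in> perms \<tau> \<Longrightarrow> act \<sigma> \<tau> \<in> TT"
  unfolding TT_def using finite_dom_act perms_BJ by blast

lemma NN_partition:
  assumes "\<tau> \<in> TT"
  shows "(\<integral>\<^sup>+\<tau>'. indicator B \<tau>' * of_nat (NN \<tau> \<tau>') \<partial>count_space TT) =
         of_nat (card {\<sigma> \<in> perms \<tau>. act \<sigma> \<tau> \<in> B})"
proof -
  let ?P = "perms \<tau>" and ?I = "(\<lambda>\<sigma>. act \<sigma> \<tau>) ` perms \<tau>"
  have fP: "finite ?P" using assms finite_perms unfolding TT_def by auto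
  have "(\<integral>\<^sup>+\<tau>'. indicator B \<tau>' * of_nat (NN \<tau> \<tau>') \<partial>count_space TT) =
        (\<Sum>\<tau>'\<in>?I. indicator B \<tau>' * of_nat (NN \<tau> \<tau>'))"
  proof (rule nn_integral_count_space')
    show "finite ?I" using fP by simp
    show "?I \<subseteq> TT" using act_TT assms by blast
    fix x assume "x \<notin> ?I"
    then have e: "{\<sigma> \<in> perms \<tau>. act \<sigma> \<tau> = x} = {}" by blast
    then show "indicator B x * of_nat (NN \<tau> x) = (0::ennreal)" unfolding NN_def
      by (metis card.empty mult_zero_right of_nat_0)
  qed
  also have "\<dots> = of_nat (\<Sum>\<tau>'\<in>?I. if \<tau>' \<in> B then NN \<tau> \<tau>' else 0)"
    unfolding of_nat_sum by (intro sum.cong refl) (simp add: indicator_def)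
  also have "(\<Sum>\<tau>'\<in>?I. if \<tau>' \<in> B then NN \<tau> \<tau>' else 0) = (\<Sum>\<tau>'\<in>?I \<inter> B. NN \<tau> \<tau>')"
    using fP by (simp add: sum.inter_restrict)
  also have "\<dots> = card (\<Union>\<tau>'\<in>?I \<inter> B. {\<sigma> \<in> perms \<tau>. act \<sigma> \<tau> = \<tau>'})"
    unfolding NN_def using fP by (subst card_UN_disjoint) auto
  also have "(\<Union>\<tau>'\<in>?I \<inter> B. {\<sigma> \<in> perms \<tau>. act \<sigma> \<tau> = \<tau>'}) = {\<sigma> \<in> perms \<tau>. act \<sigma> \<tau> \<in> B}"
    by auto
  finally show ?thesis .
qed

lemma ennreal_inv_nat: "n > 0 \<Longrightarrow> inverse (of_nat n :: ennreal) * of_nat n = 1"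
  using ennreal_divide_self[of "of_nat n"] by (simp add: divide_ennreal_def mult.commute of_nat_less_top)

lemma main_sum:
  fixes w :: "('s::countable) ttree \<Rightarrow> ennreal"
  assumes inv: "\<And>\<tau> \<sigma>. \<tau> \<in> TT \<Longrightarrow> \<sigma> \<in> perms \<tau> \<Longrightarrow> w (act \<sigma> \<tau>) = w \<tau>"
  shows "(\<integral>\<^sup>+\<tau>. w \<tau> * (of_nat (card {\<sigma>\<in>perms \<tau>. act \<sigma> \<tau> \<in> B}) * inverse (of_nat (card (perms \<tau>)))) \<partial>count_space TT)
       = (\<integral>\<^sup>+\<tau>. w \<tau> * indicator B \<tau> \<partial>count_space TT)"
proof -
  define c where "c \<tau> = (of_nat (card (perms \<tau>)) :: ennreal)" for \<tau> :: "'s ttree"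
  let ?C = "count_space (TT :: 's ttree set)"
  have "(\<integral>\<^sup>+\<tau>. w \<tau> * (of_nat (card {\<sigma>\<in>perms \<tau>. act \<sigma> \<tau> \<in> B}) * inverse (of_nat (card (perms \<tau>)))) \<partial>?C)
      = (\<integral>\<^sup>+\<tau>. \<integral>\<^sup>+\<tau>'. w \<tau> * inverse (c \<tau>) * (indicator B \<tau>' * of_nat (NN \<tau> \<tau>')) \<partial>?C \<partial>?C)"
  proof (rule nn_integral_cong)
    fix \<tau> assume "\<tau> \<in> space ?C"
    then have t: "\<tau> \<in> TT" by simp
    have "(\<integral>\<^sup>+\<tau>'. w \<tau> * inverse (c \<tau>) * (indicator B \<tau>' * of_nat (NN \<tau> \<tau>')) \<partial>?C)
        = w \<tau> * inverse (c \<tau>) * (\<integral>\<^sup>+\<tau>'. indicator B \<tau>' * of_nat (NN \<tau> \<tau>') \<partial>?C)"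
      by (rule nn_integral_cmult) simp
    also have "\<dots> = w \<tau> * inverse (c \<tau>) * of_nat (card {\<sigma>\<in>perms \<tau>. act \<sigma> \<tau> \<in> B})"
      using NN_partition[OF t] by simp
    finally show "w \<tau> * (of_nat (card {\<sigma>\<in>perms \<tau>. act \<sigma> \<tau> \<in> B}) * inverse (of_nat (card (perms \<tau>))))
        = (\<integral>\<^sup>+\<tau>'. w \<tau> * inverse (c \<tau>) * (indicator B \<tau>' * of_nat (NN \<tau> \<tau>')) \<partial>?C)"
      by (simp add: c_def mult_ac)
  qed
  also have "\<dots> = (\<integral>\<^sup>+\<tau>'. \<integral>\<^sup>+\<tau>. w \<tau> * inverse (c \<tau>) * (indicator B \<tau>' * of_nat (NN \<tau> \<tau>')) \<partial>?C \<partial>?C)"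
    by (rule nn_integral_count_space_nn_integral[OF countable_TT]) simp
  also have "\<dots> = (\<integral>\<^sup>+\<tau>'. w \<tau>' * indicator B \<tau>' \<partial>?C)"
  proof (rule nn_integral_cong)
    fix \<tau>' assume "\<tau>' \<in> space ?C"
    then have t': "\<tau>' \<in> TT" by simp
    have "(\<integral>\<^sup>+\<tau>. w \<tau> * inverse (c \<tau>) * (indicator B \<tau>' * of_nat (NN \<tau> \<tau>')) \<partial>?C)
        = (\<integral>\<^sup>+\<tau>. indicator B \<tau>' * (w \<tau>' * inverse (c \<tau>')) * of_nat (NN \<tau>' \<tau>) \<partial>?C)"
    proof (rule nn_integral_cong)
      fix \<tau> assume "\<tau> \<in> space ?C"
      then have t: "\<tau> \<in> TT" by simp
      show "w \<tau> * inverse (c \<tau>) * (indicator B \<tau>' * of_nat (NN \<tau> \<tau>')) =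
            indicator B \<tau>' * (w \<tau>' * inverse (c \<tau>')) * of_nat (NN \<tau>' \<tau>)"
      proof (cases "NN \<tau> \<tau>' = 0")
        case True
        then show ?thesis using NN_sym[of \<tau> \<tau>'] by simp
      next
        case False
        then have "{\<sigma> \<in> perms \<tau>. act \<sigma> \<tau> = \<tau>'} \<noteq> {}" unfolding NN_def by (metis card.empty)
        then obtain \<sigma> where s: "\<sigma> \<in> perms \<tau>" "act \<sigma> \<tau> = \<tau>'" by blast
        have "w \<tau>' = w \<tau>" using inv[OF t s(1)] s(2) by simp
        moreover have "c \<tau>' = c \<tau>" using card_perms_act[OF s(1)] t s(2) unfolding c_def TT_def by simp
        ultimately show ?thesis using NN_sym[of \<tau> \<tau>'] by (simp add: mult_ac)
      qed
    qed
    also have "\<dots> = indicator B \<tau>' * (w \<tau>' * inverse (c \<tau>')) * (\<integral>\<^sup>+\<tau>. of_nat (NN \<tau>' \<tau>) \<partial>?C)"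
      by (rule nn_integral_cmult) simp
    also have "(\<integral>\<^sup>+\<tau>. of_nat (NN \<tau>' \<tau>) \<partial>?C) = c \<tau>'"
      using NN_partition[OF t', of UNIV] unfolding c_def by simp
    also have "indicator B \<tau>' * (w \<tau>' * inverse (c \<tau>')) * c \<tau>' = w \<tau>' * indicator B \<tau>'"
      using ennreal_inv_nat[OF card_perms_pos[of \<tau>']] t' unfolding c_def TT_def
      by (simp add: mult_ac)
    finally show "(\<integral>\<^sup>+\<tau>. w \<tau> * inverse (c \<tau>) * (indicator B \<tau>' * of_nat (NN \<tau> \<tau>')) \<partial>?C) = w \<tau>' * indicator B \<tau>'" .
  qed
  finally show ?thesis .
qed



lemma fst_meas: "fst \<in> measurable ltreeM (count_space UNIV)"
  unfolding ltreeM_def by (rule measurable_fst)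
lemma space_ltreeM[simp]: "space ltreeM = UNIV"
  by (simp add: ltreeM_def space_pair_measure space_PiM PiE_UNIV_domain)
lemma fst_sets: "{x. fst x \<in> B} \<in> sets ltreeM"
proof -
  have "fst -` B \<inter> space ltreeM \<in> sets ltreeM" by (rule measurable_sets[OF fst_meas]) simp
  moreover have "fst -` B \<inter> space ltreeM = {x. fst x \<in> B}" by auto
  ultimately show ?thesis by simp
qed
lemma LamN_meas: "LamN q \<in> measurable ltreeM borel"
proof -
  define G where "G = (\<lambda>\<tau>. ext01 (\<lambda>s. Lam q \<tau> s / real (card (dom \<tau>))))"
  have e: "LamN q = G \<circ> fst"
    unfolding G_def LamN_def comp_def ..
  have "G \<in> measurable (count_space UNIV) borel"
    by (rule measurable_count_space_eq1[THEN iffD2]) simp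
  from measurable_comp[OF fst_meas this] show ?thesis unfolding e .
qed

lemma integral_fst:
  fixes \<nu> :: "('s::countable) ltree measure"
  assumes sets: "sets \<nu> = sets ltreeM" and ae: "AE x in \<nu>. fst x \<in> TT"
  shows "(\<integral>\<^sup>+x. g (fst x) \<partial>\<nu>) = (\<integral>\<^sup>+\<tau>. emeasure \<nu> {x. fst x = \<tau>} * g \<tau> \<partial>count_space TT)"
proof -
  have S: "{x. fst x = \<tau>} \<in> sets \<nu>" for \<tau> using fst_sets[of "{\<tau>}"] sets by simp
  have "(\<integral>\<^sup>+x. g (fst x) \<partial>\<nu>) = (\<integral>\<^sup>+x. \<integral>\<^sup>+\<tau>. g \<tau> * indicator {y. fst y = \<tau>} x \<partial>count_space TT \<partial>\<nu>)"
  proof (rule nn_integral_cong_AE)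
    show "AE x in \<nu>. g (fst x) = (\<integral>\<^sup>+\<tau>. g \<tau> * indicator {y. fst y = \<tau>} x \<partial>count_space TT)"
      using ae
    proof (rule eventually_mono)
      fix x :: "'s ltree" assume x: "fst x \<in> TT"
      have "(\<integral>\<^sup>+\<tau>. g \<tau> * indicator {y. fst y = \<tau>} x \<partial>count_space TT) = (\<Sum>\<tau>\<in>{fst x}. g \<tau> * indicator {y. fst y = \<tau>} x)"
        by (rule nn_integral_count_space') (use x in auto)
      then show "g (fst x) = (\<integral>\<^sup>+\<tau>. g \<tau> * indicator {y. fst y = \<tau>} x \<partial>count_space TT)" by simp
    qed
  qed
  also have "\<dots> = (\<integral>\<^sup>+\<tau>. \<integral>\<^sup>+x. g \<tau> * indicator {y. fst y = \<tau>} x \<partial>\<nu> \<partial>count_space TT)"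
    by (rule nn_integral_count_space_nn_integral[OF countable_TT]) (use S in simp)
  also have "\<dots> = (\<integral>\<^sup>+\<tau>. emeasure \<nu> {x. fst x = \<tau>} * g \<tau> \<partial>count_space TT)"
    by (intro nn_integral_cong) (simp add: nn_integral_cmult_indicator S mult.commute)
  finally show ?thesis .
qed

definition KK :: "'s ltree \<Rightarrow> 's ltree measure" where
  "KK = (\<lambda>x. distr (measure_pmf (pmf_of_set (perms (fst x)))) ltreeM (\<lambda>\<sigma>. actL \<sigma> x))"

lemma sym_law_KK: "sym_law \<nu> = \<nu> \<bind> KK"
  by (simp add: sym_law_def KK_def)

lemma fst_actL: "fst (actL \<sigma> x) = act \<sigma> (fst x)"
  by (simp add: actL_def act_def)

lemma KK_fst:
  assumes "fst x \<in> TT"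
  shows "emeasure (KK x) {y. fst y \<in> B} =
    of_nat (card {\<sigma>\<in>perms (fst x). act \<sigma> (fst x) \<in> B}) * inverse (of_nat (card (perms (fst x))))"
proof -
  have f: "finite (perms (fst x))" using finite_perms assms unfolding TT_def by auto
  have ne: "perms (fst x) \<noteq> {}" using id_perms by blast
  have "emeasure (KK x) {y. fst y \<in> B} =
        emeasure (measure_pmf (pmf_of_set (perms (fst x)))) {\<sigma>. act \<sigma> (fst x) \<in> B}"
    unfolding KK_def by (subst emeasure_distr) (auto simp: fst_sets fst_actL)
  also have "\<dots> = ennreal (real (card (perms (fst x) \<inter> {\<sigma>. act \<sigma> (fst x) \<in> B})) / real (card (perms (fst x))))"
    by (rule emeasure_pmf_of_set[OF ne f])
  also have "\<dots> = of_nat (card (perms (fst x) \<inter> {\<sigma>. act \<sigma> (fst x) \<in> B})) * inverse (of_nat (card (perms (fst x))))"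
    using f ne by (simp add: divide_ennreal[symmetric] ennreal_of_nat_eq_real_of_nat divide_ennreal_def card_gt_0_iff)
  also have "perms (fst x) \<inter> {\<sigma>. act \<sigma> (fst x) \<in> B} = {\<sigma>\<in>perms (fst x). act \<sigma> (fst x) \<in> B}" by auto
  finally show ?thesis .
qed

lemma valid_facts:
  fixes \<nu> :: "'s ltree measure"
  assumes "valid_law \<nu>"
  shows "prob_space \<nu>" "sets \<nu> = sets ltreeM" "space \<nu> = UNIV" "AE x in \<nu>. fst x \<in> TT"
    "\<And>(\<tau>::'s ttree) \<sigma>. \<sigma> \<in> perms \<tau> \<Longrightarrow> emeasure \<nu> {x. fst x = act \<sigma> \<tau>} = emeasure \<nu> {x. fst x = \<tau>}"
proof -
  note vl = assms[unfolded valid_law_def]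
  show P: "prob_space \<nu>" using vl by (rule conjunct1)
  show S: "sets \<nu> = sets ltreeM" using vl[THEN conjunct2] by (rule conjunct1)
  show SP: "space \<nu> = UNIV" using sets_eq_imp_space_eq[OF S] by simp
  have "AE x in \<nu>. is_ltree x" using vl[THEN conjunct2, THEN conjunct2] by (rule conjunct1)
  then show "AE x in \<nu>. fst x \<in> TT"
    by (rule eventually_mono) (simp add: is_ltree_def plane_tree_def TT_def)
  have I: "\<forall>\<tau>. \<forall>\<sigma>\<in>perms \<tau>. emeasure \<nu> {x \<in> space \<nu>. fst x = act \<sigma> \<tau>} = emeasure \<nu> {x \<in> space \<nu>. fst x = \<tau>}"
    using vl[THEN conjunct2, THEN conjunct2, THEN conjunct2] by (rule conjunct1)
  fix \<tau> :: "'s ttree" and \<sigma> assume "\<sigma> \<in> perms \<tau>"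
  then show "emeasure \<nu> {x. fst x = act \<sigma> \<tau>} = emeasure \<nu> {x. fst x = \<tau>}"
    using I SP by simp
qed

lemma key:
  fixes \<nu> :: "('s::countable) ltree measure"
  assumes valid: "valid_law \<nu>" and meas: "KK \<in> measurable \<nu> (subprob_algebra ltreeM)"
  shows "emeasure (sym_law \<nu>) {x. fst x \<in> B} = emeasure \<nu> {x. fst x \<in> B}"
proof -
  note V = valid_facts[OF valid]
  have ne: "space \<nu> \<noteq> {}" using V(3) by simp
  define w where "w \<tau> = emeasure \<nu> {x. fst x = \<tau>}" for \<tau> :: "'s ttree"
  have "emeasure (sym_law \<nu>) {x. fst x \<in> B} = (\<integral>\<^sup>+x. emeasure (KK x) {y. fst y \<in> B} \<partial>\<nu>)"
    unfolding sym_law_KK by (rule emeasure_bind[OF ne meas fst_sets])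
  also have "\<dots> = (\<integral>\<^sup>+x. (\<lambda>\<tau>. of_nat (card {\<sigma>\<in>perms \<tau>. act \<sigma> \<tau> \<in> B}) * inverse (of_nat (card (perms \<tau>)))) (fst x) \<partial>\<nu>)"
    by (rule nn_integral_cong_AE) (use V(4) in \<open>auto simp: KK_fst\<close>)
  also have "\<dots> = (\<integral>\<^sup>+\<tau>. w \<tau> * (of_nat (card {\<sigma>\<in>perms \<tau>. act \<sigma> \<tau> \<in> B}) * inverse (of_nat (card (perms \<tau>)))) \<partial>count_space TT)"
    unfolding w_def by (rule integral_fst[OF V(2) V(4)])
  also have "\<dots> = (\<integral>\<^sup>+\<tau>. w \<tau> * indicator B \<tau> \<partial>count_space TT)"
    by (rule main_sum) (simp add: w_def V(5))
  also have "\<dots> = (\<integral>\<^sup>+x. indicator B (fst x) \<partial>\<nu>)"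
    unfolding w_def by (rule integral_fst[OF V(2) V(4), symmetric])
  also have "\<dots> = (\<integral>\<^sup>+x. indicator {x. fst x \<in> B} x \<partial>\<nu>)"
    by (simp add: indicator_def)
  also have "\<dots> = emeasure \<nu> {x. fst x \<in> B}"
    using fst_sets[of B] V(2) by simp
  finally show ?thesis .
qed



lemma good_distr:
  fixes \<nu> :: "('s::countable) ltree measure"
  assumes valid: "valid_law \<nu>" and meas: "KK \<in> measurable \<nu> (subprob_algebra ltreeM)"
  shows "distr (sym_law \<nu>) borel (LamN q) = distr \<nu> borel (LamN q)"
proof -
  note V = valid_facts[OF valid]
  have ne: "space \<nu> \<noteq> {}" using V(3) by simp
  have S: "sets (sym_law \<nu>) = sets ltreeM"
    unfolding sym_law_KK by (rule sets_bind[OF sets_kernel[OF meas] ne])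
  have SP: "space (sym_law \<nu>) = UNIV" using sets_eq_imp_space_eq[OF S] by simp
  define G where "G = (\<lambda>\<tau>::'s ttree. ext01 (\<lambda>s. Lam q \<tau> s / real (card (dom \<tau>))))"
  have e: "LamN q = G \<circ> fst"
    unfolding G_def LamN_def comp_def ..
  have m1: "LamN q \<in> measurable (sym_law \<nu>) borel"
    unfolding measurable_cong_sets[OF S refl] by (rule LamN_meas)
  have m2: "LamN q \<in> measurable \<nu> borel"
    unfolding measurable_cong_sets[OF V(2) refl] by (rule LamN_meas)
  show ?thesis
  proof (rule measure_eqI)
    show "sets (distr (sym_law \<nu>) borel (LamN q)) = sets (distr \<nu> borel (LamN q))"
      unfolding sets_distr ..
    fix A assume "A \<in> sets (distr (sym_law \<nu>) borel (LamN q))"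
    then have A: "A \<in> sets borel" unfolding sets_distr .
    have pre: "LamN q -` A \<inter> UNIV = {x. fst x \<in> G -` A}" unfolding e by auto
    show "emeasure (distr (sym_law \<nu>) borel (LamN q)) A = emeasure (distr \<nu> borel (LamN q)) A"
      unfolding emeasure_distr[OF m1 A] emeasure_distr[OF m2 A] SP V(3) pre
      by (rule key[OF valid meas])
  qed
qed

lemma null_distr: "(\<And>X. emeasure M X = 0) \<Longrightarrow> emeasure (distr M N f) A = 0"
  by (simp add: distr_def emeasure_measure_of_conv)

lemma null_nn_integral:
  assumes "\<And>X. emeasure M X = 0" shows "(\<integral>\<^sup>+x. f x \<partial>M) = 0"
proof -
  have "space M \<in> null_sets M" using assms by (simp add: null_sets_def)
  then have "AE x in M. f x = 0" by (rule AE_I') auto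
  then have "(\<integral>\<^sup>+x. f x \<partial>M) = (\<integral>\<^sup>+x. 0 \<partial>M)" by (rule nn_integral_cong_AE)
  then show ?thesis by simp
qed

lemma null_join: assumes "\<And>X. emeasure D X = 0" shows "emeasure (join D) A = 0"
  unfolding join_def emeasure_measure_of_conv using null_nn_integral[of D, OF assms] by simp

lemma KK_space: "KK x \<in> space (subprob_algebra ltreeM)"
proof -
  have "prob_space (KK x)" unfolding KK_def
    by (rule prob_space.prob_space_distr) (auto simp: prob_space_measure_pmf)
  then show ?thesis by (simp add: space_subprob_algebra KK_def prob_space_imp_subprob_space)
qed

lemma bad_null:
  fixes \<nu> :: "('s::countable) ltree measure"
  assumes valid: "valid_law \<nu>" and nmeas: "KK \<notin> measurable \<nu> (subprob_algebra ltreeM)"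
  shows "emeasure (sym_law \<nu>) X = 0"
proof -
  note V = valid_facts[OF valid]
  have ne: "space \<nu> \<noteq> {}" using V(3) by simp
  let ?SA = "subprob_algebra ltreeM :: 's ltree measure measure"
  have SAeq: "subprob_algebra (KK x) = ?SA" for x
    by (rule subprob_algebra_cong) (simp add: KK_def)
  have symeq: "sym_law \<nu> = join (distr \<nu> ?SA KK)"
    unfolding sym_law_KK bind_def using ne SAeq by simp
  define \<mu> where "\<mu> = (\<lambda>A. emeasure \<nu> (KK -` A \<inter> space \<nu>))"
  have KKsp: "KK \<in> space \<nu> \<rightarrow> space ?SA" using KK_space by blast
  obtain A where A: "A \<in> sets ?SA" "KK -` A \<inter> space \<nu> \<notin> sets \<nu>"
    using nmeas KKsp unfolding measurable_def by blast
  have A': "space ?SA - A \<in> sets ?SA" using A(1) by auto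
  have "KK -` (space ?SA - A) \<inter> space \<nu> = space \<nu> - (KK -` A \<inter> space \<nu>)" using KKsp by blast
  moreover have "space \<nu> - (space \<nu> - (KK -` A \<inter> space \<nu>)) = KK -` A \<inter> space \<nu>" by blast
  ultimately have nA': "KK -` (space ?SA - A) \<inter> space \<nu> \<notin> sets \<nu>"
    using A(2) by (metis sets.compl_sets)
  have mA: "\<mu> A = 0" "\<mu> (space ?SA - A) = 0"
    unfolding \<mu>_def using A(2) nA' by (simp_all add: emeasure_notin_sets)
  have "KK -` space ?SA \<inter> space \<nu> = space \<nu>" using KKsp by blast
  then have mS: "\<mu> (space ?SA) = 1"
    unfolding \<mu>_def using prob_space.emeasure_space_1[OF V(1)] by simp
  have nms: "\<not> measure_space (space ?SA) (sigma_sets (space ?SA) (sets ?SA)) \<mu>"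
  proof
    assume ms: "measure_space (space ?SA) (sigma_sets (space ?SA) (sets ?SA)) \<mu>"
    then have "positive (sets ?SA) \<mu>" "countably_additive (sets ?SA) \<mu>"
      by (simp_all add: measure_space_def sets.sigma_sets_eq)
    then have add: "additive (sets ?SA) \<mu>"
      by (rule sets.countably_additive_additive)
    have "A \<union> (space ?SA - A) = space ?SA" using sets.sets_into_space[OF A(1)] by blast
    then have "\<mu> (space ?SA) = \<mu> A + \<mu> (space ?SA - A)"
      using add A(1) A' unfolding additive_def by (metis Diff_disjoint)
    then show False using mA mS by simp
  qed
  have D0: "emeasure (distr \<nu> ?SA KK) Y = 0" for Y
    unfolding distr_def emeasure_measure_of_conv \<mu>_def[symmetric] using nms by simp
  show ?thesis unfolding symeq by (rule null_join) (rule D0)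
qed

lemma dichotomy:
  fixes \<nu> :: "('s::countable) ltree measure"
  assumes valid: "valid_law \<nu>"
  shows "distr (sym_law \<nu>) borel (LamN q) = distr \<nu> borel (LamN q) \<or>
         (\<integral>z. (1::real) \<partial>distr (sym_law \<nu>) borel (LamN q)) = 0"
proof (cases "KK \<in> measurable \<nu> (subprob_algebra ltreeM)")
  case True
  then show ?thesis using good_distr[OF valid] by blast
next
  case False
  have "emeasure (distr (sym_law \<nu>) borel (LamN q)) A = 0" for A
    by (rule null_distr) (rule bad_null[OF valid False])
  then have "measure (distr (sym_law \<nu>) borel (LamN q)) (space (distr (sym_law \<nu>) borel (LamN q))) = 0"
    by (simp add: measure_def)
  then show ?thesis by (simp add: lebesgue_integral_const)
qed

lemma int_one_distr:
  fixes \<nu> :: "('s::countable) ltree measure"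
  assumes valid: "valid_law \<nu>"
  shows "(\<integral>z. (1::real) \<partial>distr \<nu> borel (LamN q)) = 1"
proof -
  note V = valid_facts[OF valid]
  have m2: "LamN q \<in> measurable \<nu> borel"
    unfolding measurable_cong_sets[OF V(2) refl] by (rule LamN_meas)
  have "prob_space (distr \<nu> borel (LamN q))" by (rule prob_space.prob_space_distr[OF V(1) m2])
  then have "measure (distr \<nu> borel (LamN q)) (space (distr \<nu> borel (LamN q))) = 1"
    by (rule prob_space.prob_space)
  then show ?thesis by (simp add: lebesgue_integral_const)
qed

theorem proposition3p6:
  fixes \<nu> :: "nat \<Rightarrow> ('s::countable) ltree measure"
    and q :: 's
    and L :: "(real \<Rightarrow>\<^sub>C real) measure"
  assumes valid: "\<And>n. valid_law (\<nu> n)"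
    and L_prob: "prob_space L" and L_sets: "sets L = sets borel"
    and L_C01: "AE g in L. \<forall>x. apply_bcontfun g x = apply_bcontfun g (clamp01 x)"
    and conv_sym: "conv_distr (\<lambda>n. distr (sym_law (\<nu> n)) borel (LamN q)) L"
  shows "conv_distr (\<lambda>n. distr (\<nu> n) borel (LamN q)) L"
proof -
  have c1: "continuous_on UNIV (\<lambda>_::real \<Rightarrow>\<^sub>C real. 1::real) \<and> bounded (range (\<lambda>_::real \<Rightarrow>\<^sub>C real. 1::real))"
    by (simp add: continuous_on_const)
  have "(\<lambda>n. \<integral>z. (1::real) \<partial>distr (sym_law (\<nu> n)) borel (LamN q)) \<longlonglongrightarrow> (\<integral>z. (1::real) \<partial>L)"
    using conv_sym c1 unfolding conv_distr_def by blast
  moreover have "(\<integral>z. (1::real) \<partial>L) = 1" using L_prob by (simp add: lebesgue_integral_const prob_space.prob_space)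
  ultimately have "(\<lambda>n. \<integral>z. (1::real) \<partial>distr (sym_law (\<nu> n)) borel (LamN q)) \<longlonglongrightarrow> 1" by simp
  then have "eventually (\<lambda>n. (\<integral>z. (1::real) \<partial>distr (sym_law (\<nu> n)) borel (LamN q)) > 1/2) sequentially"
    by (rule order_tendstoD(1)) simp
  then have ev: "eventually (\<lambda>n. distr (sym_law (\<nu> n)) borel (LamN q) = distr (\<nu> n) borel (LamN q)) sequentially"
  proof (rule eventually_mono)
    fix n assume "(\<integral>z. (1::real) \<partial>distr (sym_law (\<nu> n)) borel (LamN q)) > 1/2"
    then show "distr (sym_law (\<nu> n)) borel (LamN q) = distr (\<nu> n) borel (LamN q)"
      using dichotomy[OF valid[of n], of q] by auto
  qed
  show ?thesis unfolding conv_distr_def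
  proof (intro allI impI)
    fix f :: "(real \<Rightarrow>\<^sub>C real) \<Rightarrow> real" assume f: "continuous_on UNIV f \<and> bounded (range f)"
    have "(\<lambda>n. \<integral>z. f z \<partial>distr (sym_law (\<nu> n)) borel (LamN q)) \<longlonglongrightarrow> (\<integral>z. f z \<partial>L)"
      using conv_sym f unfolding conv_distr_def by blast
    moreover have "eventually (\<lambda>n. (\<integral>z. f z \<partial>distr (sym_law (\<nu> n)) borel (LamN q)) = (\<integral>z. f z \<partial>distr (\<nu> n) borel (LamN q))) sequentially"
      using ev by (rule eventually_mono) simp
    ultimately show "(\<lambda>n. \<integral>z. f z \<partial>distr (\<nu> n) borel (LamN q)) \<longlonglongrightarrow> (\<integral>z. f z \<partial>L)"
      using tendsto_cong by fastforce
  qed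
qed

end
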